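(* For all integers $k\ge1$ and $n\ge0$, \[ ov_k(n) = \frac{k}{2}\,\overline{M[k]}_2(n) - k\,\overline{M[2k]}_2(n). \]
   Context: An overpartition of $n$ is a non-increasing sequence of positive integers summing to $n$ in which the first occurrence of each integer may be overlined. $ov_k(n)$ denotes the sum of all overlined parts divisible by $k$, summed over all overpartitions of $n$. With $(a_1,\dots,a_r;q)_\infty = \prod_{i\ge0}(1-a_1q^i)\cdots(1-a_rq^i)$, $\overline{P}(q) = \frac{(-q;q)_\infty}{(q;q)_\infty}$ and $C(z;q) = \frac{(q;q)_\infty}{(zq,q/z;q)_\infty}$, define for each $j\ge1$ the numbers $\overline{M[j]}(m,n)$ by $(q^j;q^j)_\infty\,\overline{P}(q)\,C(z;q^j) = \sum_{n\ge0}\sum_{m\in\mathbb{Z}}\overline{M[j]}(m,n)z^mq^n$, and $\overline{M[j]}_2(n) = \sum_{m\in\mathbb{Z}} m^2\,\overline{M[j]}(m,n)$. *)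

theory Defs
  imports "HOL-Computational_Algebra.Formal_Power_Series"
          "HOL-Computational_Algebra.Formal_Laurent_Series"
begin

text \<open>An overpartition of n is encoded as a pair (xs, S): xs is the non-increasing
  list of positive parts summing to n, and S is the set of part values whose first
  occurrence is overlined (so S is a subset of the set of parts).\<close>

definition overpartitions :: "nat \<Rightarrow> (nat list \<times> nat set) set" where
  "overpartitions n = {(xs, S). sorted_wrt (\<ge>) xs \<and> (\<forall>x\<in>set xs. 0 < x)
       \<and> sum_list xs = n \<and> S \<subseteq> set xs}"

definition ov :: "nat \<Rightarrow> nat \<Rightarrow> nat" where
  "ov k n = (\<Sum>p\<in>overpartitions n. \<Sum>v\<in>{v \<in> snd p. k dvd v}. v)"

text \<open>Formal power series in q whose coefficients are formal Laurent series in z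
  (over the rationals).  Infinite products are limits of finite partial products
  in the standard (subdegree) metric on formal power series.\<close>

type_synonym zq_series = "rat fls fps"

definition fps_infprod :: "(nat \<Rightarrow> zq_series) \<Rightarrow> zq_series" where
  "fps_infprod f = lim (\<lambda>N. \<Prod>i<N. f i)"

text \<open>qpoch a d c = (a q^d; q^c)_\<infinity> = prod_{i>=0} (1 - a q^(d + c i)).\<close>

definition qpoch :: "rat fls \<Rightarrow> nat \<Rightarrow> nat \<Rightarrow> zq_series" where
  "qpoch a d c = fps_infprod (\<lambda>i. 1 - fps_const a * fps_X ^ (d + c * i))"

definition Pbar :: zq_series where
  "Pbar = qpoch (-1) 1 1 * inverse (qpoch 1 1 1)"

definition Cj :: "nat \<Rightarrow> zq_series" where
  "Cj j = qpoch 1 j j * inverse (qpoch fls_X j j * qpoch fls_X_inv j j)"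

definition GenM :: "nat \<Rightarrow> zq_series" where
  "GenM j = qpoch 1 j j * Pbar * Cj j"

definition Mbar :: "nat \<Rightarrow> int \<Rightarrow> nat \<Rightarrow> rat" where
  "Mbar j m n = fls_nth (fps_nth (GenM j) n) m"

text \<open>Mbar[j]_2(n) = sum over m in Z of m^2 Mbar[j](m,n); for fixed n only finitely
  many m contribute.\<close>

definition Mbar2 :: "nat \<Rightarrow> nat \<Rightarrow> rat" where
  "Mbar2 j n = (\<Sum>m | Mbar j m n \<noteq> 0. of_int m ^ 2 * Mbar j m n)"

end

theory Submission
  imports Defs
begin

unbundle Formal_Laurent_Series.fps_syntax

definition eqN :: "nat \<Rightarrow> 'a::comm_ring_1 fps \<Rightarrow> 'a fps \<Rightarrow> bool" where
  "eqN n F G \<longleftrightarrow> (\<forall>m\<le>n. F$m = G$m)"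

lemma eqN_refl[simp]: "eqN n F F" by (simp add: eqN_def)
lemma eqN_sym: "eqN n F G \<Longrightarrow> eqN n G F" by (simp add: eqN_def)
lemma eqN_trans: "eqN n F G \<Longrightarrow> eqN n G H \<Longrightarrow> eqN n F H" by (simp add: eqN_def)
lemma eqN_mono: "eqN n F G \<Longrightarrow> m \<le> n \<Longrightarrow> eqN m F G" by (simp add: eqN_def)
lemma eqN_add: "eqN n F F' \<Longrightarrow> eqN n G G' \<Longrightarrow> eqN n (F+G) (F'+G')" by (simp add: eqN_def)
lemma eqN_diff: "eqN n F F' \<Longrightarrow> eqN n G G' \<Longrightarrow> eqN n (F-G) (F'-G')" by (simp add: eqN_def)
lemma eqN_mult: "eqN n F F' \<Longrightarrow> eqN n G G' \<Longrightarrow> eqN n (F*G) (F'*G')"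
  unfolding eqN_def fps_mult_nth by (intro allI impI sum.cong) auto
lemma eqN_nth: "eqN n F G \<Longrightarrow> F$n = G$n" by (simp add: eqN_def)

lemma eqN_inverse:
  fixes F G :: "'a::field fps"
  assumes "eqN n F G" "F$0 \<noteq> 0"
  shows "eqN n (inverse F) (inverse G)"
proof -
  have G0: "G$0 \<noteq> 0" using assms by (auto simp: eqN_def)
  have "eqN n (F * inverse G) (G * inverse G)" by (rule eqN_mult[OF assms(1)]) simp
  hence 1: "eqN n (F * inverse G) 1" using G0 by (simp add: inverse_mult_eq_1')
  have "eqN n (inverse F * (F * inverse G)) (inverse F * 1)" by (rule eqN_mult[OF _ 1]) simp
  hence "eqN n (inverse G) (inverse F)" using assms(2)
    by (simp add: mult.assoc[symmetric] inverse_mult_eq_1)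
  thus ?thesis by (rule eqN_sym)
qed

lemma eqN_prod:
  "(\<And>i. i \<in> A \<Longrightarrow> eqN n (f i) (g i)) \<Longrightarrow> eqN n (\<Prod>i\<in>A. f i) (\<Prod>i\<in>A. g i)"
  by (induction A rule: infinite_finite_induct) (auto intro: eqN_mult)

lemma eqN_sum:
  "(\<And>i. i \<in> A \<Longrightarrow> eqN n (f i) (g i)) \<Longrightarrow> eqN n (\<Sum>i\<in>A. f i) (\<Sum>i\<in>A. g i)"
  unfolding eqN_def by (auto simp: fps_sum_nth intro!: sum.cong)

lemma prod_stab:
  fixes f :: "nat \<Rightarrow> 'a::comm_ring_1 fps"
  assumes "\<And>i m. m \<le> i \<Longrightarrow> eqN m (f i) 1"
  shows "m \<le> N \<Longrightarrow> eqN m (\<Prod>i<N. f i) (\<Prod>i<m. f i)"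
proof (induction N rule: dec_induct)
  case base then show ?case by simp
next
  case (step N)
  have "eqN m ((\<Prod>i<N. f i) * f N) ((\<Prod>i<m. f i) * 1)"
    by (rule eqN_mult[OF step(3) assms]) (use step in auto)
  then show ?case by (simp add: mult.commute)
qed

lemma infprod_eqN:
  fixes f :: "nat \<Rightarrow> zq_series"
  assumes "\<And>i m. m \<le> i \<Longrightarrow> eqN m (f i) 1" and "n \<le> N"
  shows "eqN n (fps_infprod f) (\<Prod>i<N. f i)"
proof -
  have stab: "\<And>m N. m \<le> N \<Longrightarrow> eqN m (\<Prod>i<N. f i) (\<Prod>i<m. f i)"
    by (rule prod_stab[of f]) (use assms(1) in auto)
  define P where "P = Abs_fps (\<lambda>m. (\<Prod>i<m. f i) $ m)"
  have lim: "(\<lambda>N. \<Prod>i<N. f i) \<longlonglongrightarrow> P"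
  proof (rule tendsto_fpsI)
    fix m
    show "eventually (\<lambda>N. (\<Prod>i<N. f i) $ m = P $ m) sequentially"
      unfolding eventually_sequentially
      using stab by (auto simp: P_def eqN_def)
  qed
  hence "fps_infprod f = P" unfolding fps_infprod_def by (rule limI)
  thus ?thesis using stab assms(2) by (auto simp: P_def eqN_def)
qed

lemma factor_eqN_1:
  fixes a :: "'a::comm_ring_1"
  assumes "m < e"
  shows "eqN m (1 - fps_const a * fps_X ^ e) 1"
  using assms by (auto simp: eqN_def)

lemma qpoch_eqN:
  assumes "1 \<le> c" "1 \<le> d" "n \<le> N"
  shows "eqN n (qpoch a d c) (\<Prod>i<N. 1 - fps_const a * fps_X ^ (d + c*i))"
  unfolding qpoch_def
proof (rule infprod_eqN[OF _ assms(3)])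
  fix i m :: nat assume "m \<le> i"
  moreover have "i \<le> c * i" using assms by simp
  ultimately show "eqN m (1 - fps_const a * fps_X ^ (d + c * i)) 1"
    using assms by (intro factor_eqN_1) linarith
qed



definition fsupp :: "rat fls \<Rightarrow> int set" where "fsupp f = {m. f $$ m \<noteq> 0}"
definition FS :: "rat fls \<Rightarrow> bool" where "FS f \<longleftrightarrow> finite (fsupp f)"
definition ev :: "nat \<Rightarrow> rat fls \<Rightarrow> rat" where
  "ev k f = (\<Sum>m\<in>fsupp f. of_int m ^ k * f $$ m)"

lemma ev_on:
  assumes "finite A" "fsupp f \<subseteq> A"
  shows "ev k f = (\<Sum>m\<in>A. of_int m ^ k * f $$ m)"
  unfolding ev_def using assms by (intro sum.mono_neutral_left) (auto simp: fsupp_def)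

lemma fsupp_add: "fsupp (f + g) \<subseteq> fsupp f \<union> fsupp g" by (auto simp: fsupp_def)
lemma fsupp_uminus[simp]: "fsupp (- f) = fsupp f" by (auto simp: fsupp_def)
lemma fsupp_diff: "fsupp (f - g) \<subseteq> fsupp f \<union> fsupp g" by (auto simp: fsupp_def)

lemma FS_add[intro]: "FS f \<Longrightarrow> FS g \<Longrightarrow> FS (f + g)"
  unfolding FS_def by (meson finite_UnI fsupp_add rev_finite_subset)
lemma FS_uminus[intro]: "FS f \<Longrightarrow> FS (- f)" unfolding FS_def by simp
lemma FS_diff[intro]: "FS f \<Longrightarrow> FS g \<Longrightarrow> FS (f - g)"
  unfolding FS_def by (meson finite_UnI fsupp_diff rev_finite_subset)

lemma ev_add: "FS f \<Longrightarrow> FS g \<Longrightarrow> ev k (f + g) = ev k f + ev k g"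
proof -
  assume "FS f" "FS g"
  hence fin: "finite (fsupp f \<union> fsupp g)" by (simp add: FS_def)
  show ?thesis
    using ev_on[OF fin fsupp_add, of k] ev_on[OF fin, of f k] ev_on[OF fin, of g k]
    by (simp add: sum.distrib algebra_simps)
qed

lemma ev_uminus: "ev k (- f) = - ev k f"
  unfolding ev_def by (simp add: sum_negf)

lemma ev_diff: "FS f \<Longrightarrow> FS g \<Longrightarrow> ev k (f - g) = ev k f - ev k g"
  using ev_add[of f "-g" k] by (simp add: ev_uminus FS_uminus)

lemma ev_zero[simp]: "ev k 0 = 0" by (simp add: ev_def fsupp_def)

lemma FS_zero[simp]: "FS 0" by (simp add: FS_def fsupp_def)

lemma FS_sum: "(\<And>i. i \<in> A \<Longrightarrow> FS (h i)) \<Longrightarrow> FS (\<Sum>i\<in>A. h i)"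
  by (induction A rule: infinite_finite_induct) auto

lemma ev_sum: "(\<And>i. i \<in> A \<Longrightarrow> FS (h i)) \<Longrightarrow> ev k (\<Sum>i\<in>A. h i) = (\<Sum>i\<in>A. ev k (h i))"
proof (induction A rule: infinite_finite_induct)
  case (insert x F)
  then show ?case by (simp add: ev_add FS_sum)
qed auto

lemma fsupp_const: "fsupp (fls_const c) \<subseteq> {0}" by (auto simp: fsupp_def)
lemma FS_const[intro]: "FS (fls_const c)"
  unfolding FS_def by (meson finite.emptyI finite_insert fsupp_const rev_finite_subset)
lemma FS_one[intro]: "FS 1" using FS_const[of 1] by simp
lemma FS_X[intro]: "FS fls_X"
  unfolding FS_def fsupp_def by (simp add: fls_X_nth)
lemma FS_X_inv[intro]: "FS fls_X_inv"
  unfolding FS_def fsupp_def by (simp add: fls_X_inv_nth)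

lemma ev_one: "ev k 1 = (if k = 0 then 1 else 0)"
proof -
  have "fsupp (1::rat fls) = {0}" by (auto simp: fsupp_def)
  thus ?thesis by (simp add: ev_def)
qed
lemma ev_const: "ev k (fls_const c) = (if k = 0 then c else 0)"
  by (rule trans[OF ev_on[of "{0}"]]) (auto simp: fsupp_def)
lemma ev_X: "ev k fls_X = 1"
  by (rule trans[OF ev_on[of "{1}"]]) (auto simp: fsupp_def fls_X_nth)
lemma ev_X_inv: "ev k fls_X_inv = (-1) ^ k"
  by (rule trans[OF ev_on[of "{-1}"]]) (auto simp: fsupp_def fls_X_inv_nth)

lemma fls_times_nth_on:
  fixes f g :: "rat fls"
  assumes "finite A" "fsupp f \<subseteq> A"
  shows "(f * g) $$ n = (\<Sum>a\<in>A. f $$ a * g $$ (n - a))"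
proof -
  define B where "B = {fls_subdegree f..n - fls_subdegree g}"
  have "(f * g) $$ n = (\<Sum>a\<in>B. f $$ a * g $$ (n - a))"
    unfolding B_def by (rule fls_times_nth(2))
  also have "\<dots> = (\<Sum>a\<in>A \<union> B. f $$ a * g $$ (n - a))"
  proof (rule sum.mono_neutral_left)
    show "\<forall>i\<in>A \<union> B - B. f $$ i * g $$ (n - i) = 0"
    proof
      fix i assume "i \<in> A \<union> B - B"
      hence "i < fls_subdegree f \<or> n - i < fls_subdegree g" by (auto simp: B_def)
      thus "f $$ i * g $$ (n - i) = 0" by auto
    qed
  qed (use assms in \<open>auto simp: B_def\<close>)
  also have "\<dots> = (\<Sum>a\<in>A. f $$ a * g $$ (n - a))"
    by (rule sum.mono_neutral_right) (use assms in \<open>auto simp: B_def fsupp_def\<close>)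
  finally show ?thesis .
qed

lemma fsupp_mult: "FS f \<Longrightarrow> fsupp (f * g) \<subseteq> (\<lambda>(a,b). a + b) ` (fsupp f \<times> fsupp g)"
proof
  fix n assume F: "FS f" and n: "n \<in> fsupp (f * g)"
  have "(f * g) $$ n = (\<Sum>a\<in>fsupp f. f $$ a * g $$ (n - a))"
    using F by (intro fls_times_nth_on) (auto simp: FS_def)
  with n obtain a where "a \<in> fsupp f" "f $$ a * g $$ (n - a) \<noteq> 0"
    by (metis (mono_tags, lifting) fsupp_def mem_Collect_eq sum.neutral)
  hence "a \<in> fsupp f" "n - a \<in> fsupp g" by (auto simp: fsupp_def)
  thus "n \<in> (\<lambda>(a,b). a + b) ` (fsupp f \<times> fsupp g)"
    by (intro image_eqI[of _ _ "(a, n - a)"]) auto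
qed

lemma FS_mult[intro]: "FS f \<Longrightarrow> FS g \<Longrightarrow> FS (f * g)"
  unfolding FS_def using fsupp_mult
  by (metis FS_def finite_SigmaI finite_imageI rev_finite_subset)

lemma FS_prod: "(\<And>i. i \<in> A \<Longrightarrow> FS (h i)) \<Longrightarrow> FS (\<Prod>i\<in>A. h i)"
  by (induction A rule: infinite_finite_induct) auto

lemma FS_power[intro]: "FS f \<Longrightarrow> FS (f ^ n)"
  by (induction n) auto

lemma ev_mult_gen:
  fixes f g :: "rat fls" and \<phi> :: "int \<Rightarrow> rat"
  assumes F: "FS f" and G: "FS g"
  shows "(\<Sum>n\<in>fsupp (f*g). \<phi> n * (f*g) $$ n) =
         (\<Sum>a\<in>fsupp f. \<Sum>b\<in>fsupp g. \<phi> (a + b) * (f $$ a * g $$ b))"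
proof -
  define T where "T = (\<lambda>(a,b). a + b) ` (fsupp f \<times> fsupp g)"
  have finT: "finite T" using F G by (auto simp: T_def FS_def)
  have finf: "finite (fsupp f)" and fing: "finite (fsupp g)" using F G by (auto simp: FS_def)
  have "(\<Sum>n\<in>fsupp (f*g). \<phi> n * (f*g) $$ n) = (\<Sum>n\<in>T. \<phi> n * (f*g) $$ n)"
    by (rule sum.mono_neutral_left) (use finT fsupp_mult[OF F, of g] in \<open>auto simp: T_def fsupp_def\<close>)
  also have "\<dots> = (\<Sum>n\<in>T. \<Sum>a\<in>fsupp f. \<phi> n * (f $$ a * g $$ (n - a)))"
    by (intro sum.cong refl) (simp add: fls_times_nth_on[OF finf] sum_distrib_left)
  also have "\<dots> = (\<Sum>a\<in>fsupp f. \<Sum>n\<in>T. \<phi> n * (f $$ a * g $$ (n - a)))"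
    by (rule sum.swap)
  also have "\<dots> = (\<Sum>a\<in>fsupp f. \<Sum>b\<in>fsupp g. \<phi> (a + b) * (f $$ a * g $$ b))"
  proof (rule sum.cong[OF refl])
    fix a assume a: "a \<in> fsupp f"
    have "(\<Sum>n\<in>T. \<phi> n * (f $$ a * g $$ (n - a))) = (\<Sum>n\<in>(\<lambda>b. a + b) ` fsupp g. \<phi> n * (f $$ a * g $$ (n - a)))"
    proof (rule sum.mono_neutral_right)
      show "(\<lambda>b. a + b) ` fsupp g \<subseteq> T" using a by (auto simp: T_def)
      show "\<forall>i\<in>T - (\<lambda>b. a + b) ` fsupp g. \<phi> i * (f $$ a * g $$ (i - a)) = 0"
      proof
        fix i assume i: "i \<in> T - (\<lambda>b. a + b) ` fsupp g"
        have "g $$ (i - a) = 0"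
        proof (rule ccontr)
          assume "g $$ (i - a) \<noteq> 0"
          hence "a + (i - a) \<in> (\<lambda>b. a + b) ` fsupp g" unfolding fsupp_def by (intro imageI) simp
          thus False using i by simp
        qed
        thus "\<phi> i * (f $$ a * g $$ (i - a)) = 0" by simp
      qed
    qed (use finT in auto)
    also have "\<dots> = (\<Sum>b\<in>fsupp g. \<phi> (a + b) * (f $$ a * g $$ b))"
      by (subst sum.reindex) (auto simp: inj_on_def)
    finally show "(\<Sum>n\<in>T. \<phi> n * (f $$ a * g $$ (n - a))) = (\<Sum>b\<in>fsupp g. \<phi> (a + b) * (f $$ a * g $$ b))" .
  qed
  finally show ?thesis .
qed

lemma ev_mult_gen':
  assumes "FS f" "FS g"
  shows "ev k (f * g) = (\<Sum>a\<in>fsupp f. \<Sum>b\<in>fsupp g. of_int (a + b) ^ k * (f $$ a * g $$ b))"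
  unfolding ev_def using ev_mult_gen[OF assms, of "\<lambda>n. of_int n ^ k"] by simp

lemma ev_prod_sum:
  "ev i f * ev j g = (\<Sum>a\<in>fsupp f. \<Sum>b\<in>fsupp g. (of_int a ^ i * of_int b ^ j) * (f $$ a * g $$ b))"
  unfolding ev_def sum_product by (intro sum.cong refl) (simp add: algebra_simps)

lemma ev0_mult: "FS f \<Longrightarrow> FS g \<Longrightarrow> ev 0 (f * g) = ev 0 f * ev 0 g"
  by (simp add: ev_mult_gen' ev_prod_sum)

lemma ev1_mult: "FS f \<Longrightarrow> FS g \<Longrightarrow> ev 1 (f * g) = ev 0 f * ev 1 g + ev 1 f * ev 0 g"
  apply (simp only: ev_mult_gen' ev_prod_sum sum.distrib[symmetric])
  by (intro sum.cong refl) (simp add: algebra_simps)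

lemma ev2_mult: "FS f \<Longrightarrow> FS g \<Longrightarrow> ev 2 (f * g) = ev 0 f * ev 2 g + 2 * (ev 1 f * ev 1 g) + ev 2 f * ev 0 g"
  apply (simp only: ev_mult_gen' ev_prod_sum sum.distrib[symmetric] sum_distrib_left)
  by (intro sum.cong refl) (simp add: algebra_simps power2_eq_square)



definition FSS :: "zq_series \<Rightarrow> bool" where "FSS F \<longleftrightarrow> (\<forall>n. FS (F$n))"
definition CS :: "zq_series \<Rightarrow> bool" where "CS F \<longleftrightarrow> (\<forall>n. fsupp (F$n) \<subseteq> {0})"
definition Ek :: "nat \<Rightarrow> zq_series \<Rightarrow> rat fps" where "Ek k F = Abs_fps (\<lambda>n. ev k (F$n))"

lemma Ek_nth[simp]: "Ek k F $ n = ev k (F $ n)" by (simp add: Ek_def)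

lemma FSS_mult[intro]: "FSS F \<Longrightarrow> FSS G \<Longrightarrow> FSS (F * G)"
  unfolding FSS_def fps_mult_nth by (auto intro!: FS_sum)
lemma FSS_add[intro]: "FSS F \<Longrightarrow> FSS G \<Longrightarrow> FSS (F + G)"
  unfolding FSS_def by auto
lemma FSS_diff[intro]: "FSS F \<Longrightarrow> FSS G \<Longrightarrow> FSS (F - G)"
  unfolding FSS_def by auto
lemma FSS_one[intro]: "FSS 1"
  unfolding FSS_def by (auto simp: fps_one_nth)
lemma FSS_mono[intro]: "FS c \<Longrightarrow> FSS (fps_const c * fps_X ^ e)"
  unfolding FSS_def by auto
lemma FSS_prod: "(\<And>i. i \<in> A \<Longrightarrow> FSS (h i)) \<Longrightarrow> FSS (\<Prod>i\<in>A. h i)"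
  by (induction A rule: infinite_finite_induct) auto

lemma fsupp_mult_CS: "fsupp f \<subseteq> {0} \<Longrightarrow> fsupp g \<subseteq> {0} \<Longrightarrow> fsupp (f * g) \<subseteq> {0}"
proof -
  assume f: "fsupp f \<subseteq> {0}" and g: "fsupp g \<subseteq> {0}"
  hence "FS f" unfolding FS_def using finite_subset by blast
  have "(\<lambda>(a,b). a + b) ` (fsupp f \<times> fsupp g) \<subseteq> (\<lambda>(a,b). a + b) ` ({0::int} \<times> {0})"
    using f g by (intro image_mono) auto
  also have "\<dots> = {0}" by auto
  finally show ?thesis using fsupp_mult[OF \<open>FS f\<close>, of g] by blast
qed

lemma fsupp_sum_CS: "(\<And>i. i \<in> A \<Longrightarrow> fsupp (h i) \<subseteq> {0}) \<Longrightarrow> fsupp (\<Sum>i\<in>A. h i) \<subseteq> {0}"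
proof (induction A rule: infinite_finite_induct)
  case (insert x F)
  then show ?case using fsupp_add[of "h x" "sum h F"] by auto
qed (auto simp: fsupp_def)

lemma CS_FSS: "CS F \<Longrightarrow> FSS F"
  unfolding CS_def FSS_def FS_def using finite_subset by blast

lemma CS_mult[intro]: "CS F \<Longrightarrow> CS G \<Longrightarrow> CS (F * G)"
  unfolding CS_def fps_mult_nth
proof (intro allI)
  fix n assume F: "\<forall>n. fsupp (F $ n) \<subseteq> {0}" and G: "\<forall>n. fsupp (G $ n) \<subseteq> {0}"
  show "fsupp (\<Sum>i = 0..n. F $ i * G $ (n - i)) \<subseteq> {0}"
    using F G by (intro fsupp_sum_CS fsupp_mult_CS) auto
qed

lemma P_sum_closed:
  assumes "P 0" "\<And>x y. P x \<Longrightarrow> P y \<Longrightarrow> P (x+y)"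
  shows "(\<And>i. i \<in> A \<Longrightarrow> P (h i)) \<Longrightarrow> P (\<Sum>i\<in>A. h i)"
  by (induction A rule: infinite_finite_induct) (use assms in auto)

lemma inverse_nth_closed:
  fixes F :: zq_series
  assumes F0: "F$0 = 1" and P: "\<And>i. P (F$i)" "P 0" "P 1"
    "\<And>x y. P x \<Longrightarrow> P y \<Longrightarrow> P (x+y)" "\<And>x y. P x \<Longrightarrow> P y \<Longrightarrow> P (x*y)" "\<And>x. P x \<Longrightarrow> P (-x)"
  shows "P (inverse F $ n)"
proof -
  have "P (natfun_inverse F n)"
  proof (induction n rule: less_induct)
    case (less n)
    show ?case
    proof (cases n)
      case 0 then show ?thesis using F0 P by simp
    next
      case (Suc m)
      have "P (\<Sum>i\<in>{1..Suc m}. F$i * natfun_inverse F (Suc m - i))"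
        by (rule P_sum_closed[of P]) (use P less Suc in auto)
      hence "P (- (\<Sum>i\<in>{1..Suc m}. F$i * natfun_inverse F (Suc m - i)))" by (rule P(6))
      moreover have "natfun_inverse F (Suc m) = - (\<Sum>i\<in>{1..Suc m}. F$i * natfun_inverse F (Suc m - i))"
        using F0 by (simp del: sum.atLeast_Suc_atMost sum.cl_ivl_Suc)
      ultimately show ?thesis using Suc by simp
    qed
  qed
  thus ?thesis by (simp add: fps_inverse_def)
qed

lemma FSS_inverse: "FSS F \<Longrightarrow> F$0 = 1 \<Longrightarrow> FSS (inverse F)"
  unfolding FSS_def by (intro allI inverse_nth_closed[where P = FS]) auto

lemma fsupp_add_CS: "fsupp f \<subseteq> {0} \<Longrightarrow> fsupp g \<subseteq> {0} \<Longrightarrow> fsupp (f + g) \<subseteq> {0}"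
  using fsupp_add[of f g] by blast

lemma CS_inverse: "CS F \<Longrightarrow> F$0 = 1 \<Longrightarrow> CS (inverse F)"
  unfolding CS_def 
  by (intro allI inverse_nth_closed[where P = "\<lambda>f. fsupp f \<subseteq> {0}"])
     (simp_all add: fsupp_mult_CS fsupp_add_CS fsupp_const[of 0, simplified] fsupp_const[of 1, simplified])

lemma CS_mono[intro]: "CS (fps_const (fls_const c) * fps_X ^ e)"
  unfolding CS_def using fsupp_const by (auto simp: fsupp_def)
lemma CS_one[intro]: "CS 1"
  unfolding CS_def by (auto simp: fps_one_nth fsupp_def)
lemma CS_diff[intro]: "CS F \<Longrightarrow> CS G \<Longrightarrow> CS (F - G)"
  unfolding CS_def using fsupp_diff by (metis fps_sub_nth le_sup_iff subset_trans)
lemma CS_prod: "(\<And>i. i \<in> A \<Longrightarrow> CS (h i)) \<Longrightarrow> CS (\<Prod>i\<in>A. h i)"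
  by (induction A rule: infinite_finite_induct) auto

lemma Ek_CS: "CS F \<Longrightarrow> k \<noteq> 0 \<Longrightarrow> Ek k F = 0"
proof (rule fps_ext)
  fix n assume "CS F" "k \<noteq> 0"
  hence "ev k (F$n) = (\<Sum>m\<in>{0}. of_int m ^ k * (F$n) $$ m)"
    by (intro ev_on) (auto simp: CS_def)
  thus "Ek k F $ n = 0 $ n" using \<open>k \<noteq> 0\<close> by simp
qed

lemma fps_two_mult_nth: "((2::'a::comm_ring_1 fps) * f) $ n = 2 * f $ n"
  by (simp add: numeral_fps_const)

lemma Ek0_mult: "FSS F \<Longrightarrow> FSS G \<Longrightarrow> Ek 0 (F * G) = Ek 0 F * Ek 0 G"
  unfolding FSS_def by (intro fps_ext) (simp add: fps_mult_nth ev_sum ev0_mult FS_mult)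

lemma Ek1_mult: "FSS F \<Longrightarrow> FSS G \<Longrightarrow> Ek 1 (F * G) = Ek 0 F * Ek 1 G + Ek 1 F * Ek 0 G"
  unfolding FSS_def by (intro fps_ext) (simp add: fps_mult_nth ev_sum ev1_mult[unfolded One_nat_def] sum.distrib FS_mult)

lemma Ek2_mult: "FSS F \<Longrightarrow> FSS G \<Longrightarrow>
   Ek 2 (F * G) = Ek 0 F * Ek 2 G + 2 * (Ek 1 F * Ek 1 G) + Ek 2 F * Ek 0 G"
  unfolding FSS_def apply (intro fps_ext) apply (simp only: fps_add_nth fps_two_mult_nth)
  by (simp add: fps_mult_nth ev_sum ev2_mult[unfolded One_nat_def] sum.distrib sum_distrib_left FS_mult)

lemma Ek_add: "FSS F \<Longrightarrow> FSS G \<Longrightarrow> Ek k (F + G) = Ek k F + Ek k G"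
  unfolding FSS_def by (intro fps_ext) (simp add: ev_add)
lemma Ek_diff: "FSS F \<Longrightarrow> FSS G \<Longrightarrow> Ek k (F - G) = Ek k F - Ek k G"
  unfolding FSS_def by (intro fps_ext) (simp add: ev_diff)
lemma Ek_one: "Ek k 1 = (if k = 0 then 1 else 0)"
  by (intro fps_ext) (auto simp: fps_one_nth ev_one)
lemma Ek_mono: "Ek k (fps_const c * fps_X ^ e) = fps_const (ev k c) * fps_X ^ e"
  by (intro fps_ext) auto
lemma Ek_eqN: "eqN n F G \<Longrightarrow> eqN n (Ek k F) (Ek k G)"
  by (simp add: eqN_def)

lemma Ek0_inverse:
  assumes "FSS F" "F$0 = 1"
  shows "Ek 0 (inverse F) = inverse (Ek 0 F)"
proof -
  have "Ek 0 F * Ek 0 (inverse F) = Ek 0 (F * inverse F)"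
    using assms by (simp add: Ek0_mult FSS_inverse)
  also have "\<dots> = 1" using assms by (simp add: inverse_mult_eq_1' Ek_one)
  finally show ?thesis by (intro fps_inverse_unique[symmetric])
qed



definition Lam :: "nat \<Rightarrow> rat fps" where
  "Lam a = Abs_fps (\<lambda>t. if a dvd t then of_nat (t div a) else 0)"

lemma Lam_eq:
  assumes a: "1 \<le> a"
  shows "Lam a * (1 - fps_X ^ a) ^ 2 = fps_X ^ a"
proof (rule fps_ext)
  fix t
  have e: "(1 - fps_X ^ a) ^ 2 = (1 :: rat fps) - 2 * fps_X ^ a + fps_X ^ a * fps_X ^ a"
    by (simp add: power2_eq_square algebra_simps)
  have "(Lam a * (1 - fps_X ^ a) ^ 2) $ t =
        Lam a $ t - 2 * (if t < a then 0 else Lam a $ (t - a))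
          + (if t < a then 0 else (if t - a < a then 0 else Lam a $ (t - a - a)))"
  proof -
    have "Lam a * (1 - fps_X ^ a) ^ 2 = Lam a - 2 * (Lam a * fps_X ^ a) + (Lam a * fps_X ^ a) * fps_X ^ a"
      unfolding e by (simp only: ring_distribs mult.assoc mult_1_right mult.left_commute[of "Lam a"])
    thus ?thesis by (simp only: fps_sub_nth fps_add_nth fps_two_mult_nth fps_X_power_mult_right_nth)
  qed
  also have "\<dots> = fps_X ^ a $ t"
  proof (cases "a dvd t")
    case True
    then obtain u where u: "t = a * u" by auto
    consider "u = 0" | "u = 1" | "u \<ge> 2" by linarith
    then show ?thesis
    proof cases
      case 1 then show ?thesis using u a by (simp add: Lam_def)
    next
      case 2 then show ?thesis using u a by (simp add: Lam_def)
    next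
      case 3
      have t1: "t - a = a * (u - 1)" using u by (simp add: algebra_simps)
      have t2: "t - a - a = a * (u - 2)" using u by (simp add: algebra_simps)
      have "\<not> t < a" "\<not> t - a < a" using 3 u a t1
        by (auto simp: mult_less_cancel1)
      moreover have "t \<noteq> a" using 3 u a by auto
      moreover have "(t - a) div a = u - 1" using a by (subst t1) simp
      moreover have "(t - a - a) div a = u - 2" using a by (subst t2) simp
      moreover have "t div a = u" using a u by simp
      moreover have "a dvd (t - a)" "a dvd (t - a - a)" "a dvd t" unfolding t1 t2 u by auto
      ultimately show ?thesis using 3 a
        by (simp add: Lam_def of_nat_diff)
    qed
  next
    case False
    hence "\<not> a dvd (t - a)" if "\<not> t < a" using that
      by (metis dvd_diff_nat dvd_refl le_add_diff_inverse2 not_less dvd_add)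
    moreover have "\<not> a dvd (t - a - a)" if "\<not> t < a" "\<not> t - a < a" using that False
      by (metis dvd_add dvd_refl le_add_diff_inverse2 not_less)
    moreover have "t \<noteq> a" using False by auto
    ultimately show ?thesis using False by (simp add: Lam_def)
  qed
  finally show "(Lam a * (1 - fps_X ^ a) ^ 2) $ t = fps_X ^ a $ t" .
qed

lemma fps_prod_nth0: "(\<Prod>i\<in>A. f i) $ 0 = (\<Prod>i\<in>A. (f i $ 0 :: 'a::comm_ring_1))"
  by (induction A rule: infinite_finite_induct) auto

abbreviation zf :: "rat fls \<Rightarrow> nat \<Rightarrow> zq_series" where
  "zf c e \<equiv> 1 - fps_const c * fps_X ^ e"

lemma FSS_zf[intro]: "FS c \<Longrightarrow> FSS (zf c e)" by auto

lemma Ek_zf: "FS c \<Longrightarrow> Ek k (zf c e) = Ek k 1 - fps_const (ev k c) * fps_X ^ e"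
  by (subst Ek_diff) (auto simp: Ek_mono)

lemma zf_nth0: "1 \<le> e \<Longrightarrow> zf c e $ 0 = 1" by simp

lemma Y_lemma:
  fixes a :: "nat \<Rightarrow> nat"
  assumes a: "\<And>i. 1 \<le> a i"
  defines "Y \<equiv> \<lambda>N. \<Prod>i<N. zf fls_X (a i) * zf fls_X_inv (a i)"
  defines "Q \<equiv> \<lambda>N. \<Prod>i<N. (1 - fps_X ^ (a i) :: rat fps)"
  shows "FSS (Y N) \<and> Ek 0 (Y N) = Q N ^ 2 \<and> Ek 1 (Y N) = 0 \<and>
         Ek 2 (Y N) = - 2 * Q N ^ 2 * (\<Sum>i<N. Lam (a i))"
proof (induction N)
  case 0
  then show ?case by (simp add: Y_def Q_def Ek_one FSS_one)
next
  case (Suc N)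
  define e where "e = a N"
  have e1: "1 \<le> e" using a by (simp add: e_def)
  define g where "g = zf fls_X e * zf fls_X_inv e"
  have Ysuc: "Y (Suc N) = Y N * g" by (simp add: Y_def g_def e_def)
  have Qsuc: "Q (Suc N) = Q N * (1 - fps_X ^ e)" by (simp add: Q_def e_def)
  have fX: "FSS (zf fls_X e)" "FSS (zf fls_X_inv e)" by auto
  have g0: "Ek 0 g = (1 - fps_X ^ e) ^ 2"
    unfolding g_def by (simp add: Ek0_mult[OF fX] Ek_zf FS_X FS_X_inv ev_X ev_X_inv Ek_one power2_eq_square)
  have g1: "Ek 1 g = 0"
    unfolding g_def Ek1_mult[OF fX] by (simp add: Ek_zf FS_X FS_X_inv ev_X ev_X_inv Ek_one algebra_simps)
  have g2: "Ek 2 g = - 2 * fps_X ^ e"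
    unfolding g_def Ek2_mult[OF fX] by (simp add: Ek_zf FS_X FS_X_inv ev_X ev_X_inv Ek_one algebra_simps)
  have gF: "FSS g" unfolding g_def using fX by auto
  have IH: "FSS (Y N)" "Ek 0 (Y N) = Q N ^ 2" "Ek 1 (Y N) = 0"
     "Ek 2 (Y N) = - 2 * Q N ^ 2 * (\<Sum>i<N. Lam (a i))" using Suc by auto
  have L: "fps_X ^ e = Lam e * (1 - fps_X ^ e) ^ 2" using Lam_eq[OF e1] by simp
  have E2: "Ek 2 (Y (Suc N)) = - 2 * Q N ^ 2 * fps_X ^ e
            - 2 * Q N ^ 2 * (\<Sum>i<N. Lam (a i)) * (1 - fps_X ^ e) ^ 2"
    unfolding Ysuc Ek2_mult[OF IH(1) gF] IH g0 g1 g2 by (simp add: algebra_simps)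
  also have "\<dots> = - 2 * (Q N * (1 - fps_X ^ e)) ^ 2 * ((\<Sum>i<N. Lam (a i)) + Lam e)"
    unfolding power_mult_distrib by (subst (1) L) (simp add: algebra_simps)
  finally have E2': "Ek 2 (Y (Suc N)) = - 2 * Q (Suc N) ^ 2 * (\<Sum>i<Suc N. Lam (a i))"
    by (simp add: Qsuc e_def)
  show ?case
    using IH gF E2' unfolding Ysuc
    by (simp add: Ek0_mult Ek1_mult[unfolded One_nat_def] g0 g1[unfolded One_nat_def] Qsuc power_mult_distrib FSS_mult)
qed



lemma CS_mono': "fsupp c \<subseteq> {0} \<Longrightarrow> CS (fps_const c * fps_X ^ e)"
  unfolding CS_def by (auto simp: fsupp_def)

lemma fsupp_one_CS: "fsupp (1::rat fls) \<subseteq> {0}" "fsupp (-1::rat fls) \<subseteq> {0}"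
  by (auto simp: fsupp_def)

lemma CS_zf: "fsupp c \<subseteq> {0} \<Longrightarrow> CS (zf c e)"
  by (rule CS_diff[OF CS_one CS_mono'])

lemma Ek0_prod: "(\<And>i. i \<in> A \<Longrightarrow> FSS (f i)) \<Longrightarrow> Ek 0 (\<Prod>i\<in>A. f i) = (\<Prod>i\<in>A. Ek 0 (f i))"
proof (induction A rule: infinite_finite_induct)
  case (insert x F)
  then show ?case by (simp add: Ek0_mult FSS_prod)
qed (auto simp: Ek_one)

lemma ev0_neg1: "ev 0 (-1) = -1"
  using ev_uminus[of 0 1] by (simp add: ev_one)

lemma Ek0_zf1: "Ek 0 (1 - fps_X ^ e :: zq_series) = 1 - fps_X ^ e"
  using Ek_zf[OF FS_one, of 0 e] by (simp add: ev_one Ek_one)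
lemma FSS_zf1: "FSS (1 - fps_X ^ e :: zq_series)"
  using FSS_zf[OF FS_one, of e] by simp

lemma GN_lemma:
  fixes j N :: nat
  assumes j: "1 \<le> j"
  defines "Qj \<equiv> \<Prod>i<N. zf 1 (j + j*i)"
  and "Pn \<equiv> \<Prod>i<N. zf (-1) (1 + 1*i)"
  and "Q1 \<equiv> \<Prod>i<N. zf 1 (1 + 1*i)"
  and "Xz \<equiv> \<Prod>i<N. zf fls_X (j + j*i)"
  and "Xzi \<equiv> \<Prod>i<N. zf fls_X_inv (j + j*i)"
  shows "Ek 2 (Qj * (Pn * inverse Q1) * (Qj * inverse (Xz * Xzi)))
          = 2 * Ek 0 (Pn * inverse Q1) * (\<Sum>i<N. Lam (j + j*i))"
proof -
  define GN where "GN = Qj * (Pn * inverse Q1) * (Qj * inverse (Xz * Xzi))"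
  define Y where "Y = Xz * Xzi"
  define S where "S = (\<Sum>i<N. Lam (j + j*i))"
  define Qr where "Qr = (\<Prod>i<N. (1 - fps_X ^ (j + j*i) :: rat fps))"
  define P where "P = Pn * inverse Q1"
  have Yp: "Y = (\<Prod>i<N. zf fls_X (j + j*i) * zf fls_X_inv (j + j*i))"
    unfolding Y_def Xz_def Xzi_def by (simp add: prod.distrib)
  have YL: "FSS Y" "Ek 0 Y = Qr ^ 2" "Ek 1 Y = 0" "Ek 2 Y = - 2 * Qr ^ 2 * S"
    using Y_lemma[of "\<lambda>i. j + j*i" N] j unfolding Yp Qr_def S_def by auto
  have Y0: "Y $ 0 = 1" unfolding Yp fps_prod_nth0 using j by simp
  have Q10: "Q1 $ 0 = 1" unfolding Q1_def fps_prod_nth0 by simp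
  have CSQj: "CS Qj" unfolding Qj_def by (intro CS_prod CS_zf fsupp_one_CS)
  have CSQ1: "CS Q1" unfolding Q1_def by (intro CS_prod CS_zf fsupp_one_CS)
  have CSP: "CS P" unfolding P_def Pn_def using Q10 CSQ1
    by (intro CS_mult CS_prod CS_inverse CS_zf fsupp_one_CS)
  define A where "A = Qj * P * Qj"
  have CSA: "CS A" unfolding A_def using CSQj CSP by auto
  have GA: "GN = A * inverse Y" unfolding GN_def A_def P_def Y_def by (simp add: ac_simps)
  have GY: "GN * Y = A" unfolding GA using Y0 by (simp add: mult.assoc inverse_mult_eq_1)
  have FG: "FSS GN" unfolding GA using CS_FSS[OF CSA] FSS_inverse[OF YL(1) Y0] by (rule FSS_mult)
  have EQj: "Ek 0 Qj = Qr" unfolding Qj_def Qr_def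
    by (subst Ek0_prod) (auto intro!: prod.cong simp: Ek0_zf1 FSS_zf1)
  have EA0: "Ek 0 A = Qr ^ 2 * Ek 0 P" unfolding A_def
    using CSQj CSP by (simp add: Ek0_mult CS_FSS FSS_mult EQj power2_eq_square ac_simps)
  have EA1: "Ek 1 A = 0" "Ek 2 A = 0" using CSA by (auto intro: Ek_CS)
  have Qr0: "Qr \<noteq> 0"
  proof
    assume "Qr = 0"
    hence "Qr $ 0 = 0" by simp
    moreover have "Qr $ 0 = 1" unfolding Qr_def fps_prod_nth0 using j by simp
    ultimately show False by simp
  qed
  hence Qr2: "Qr ^ 2 \<noteq> 0" by simp
  have "Ek 0 GN * Qr ^ 2 = Ek 0 P * Qr ^ 2"
    using Ek0_mult[OF FG YL(1)] GY EA0 YL(2) by (metis mult.commute)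
  hence E0G: "Ek 0 GN = Ek 0 P" using Qr2 by simp
  have "Ek 1 GN * Qr ^ 2 = 0 * Qr ^ 2"
    using Ek1_mult[OF FG YL(1)] GY EA1 YL by simp
  hence E1G: "Ek 1 GN = 0" using Qr2 mult_right_cancel by blast
  have "Ek 2 GN * Qr ^ 2 = (2 * Ek 0 P * S) * Qr ^ 2"
  proof -
    have "0 = Ek 0 P * (- 2 * Qr ^ 2 * S) + Ek 2 GN * Qr ^ 2"
      using Ek2_mult[OF FG YL(1)] GY EA1 YL E0G E1G by simp
    thus ?thesis by (simp add: algebra_simps eq_neg_iff_add_eq_0) (metis)
  qed
  hence "Ek 2 GN = 2 * Ek 0 P * S" using Qr2 mult_right_cancel by blast
  thus ?thesis unfolding GN_def P_def S_def .
qed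



definition PB :: "nat \<Rightarrow> rat fps" where
  "PB N = (\<Prod>i<N. 1 + fps_X ^ (1 + 1*i)) * inverse (\<Prod>i<N. 1 - fps_X ^ (1 + 1*i))"

lemma Ek0_zfm1: "Ek 0 (zf (-1) e) = 1 + fps_X ^ e"
  using Ek_zf[of "-1" 0 e] FS_uminus[OF FS_one] by (simp add: ev0_neg1 Ek_one)
lemma Ek0_zfp1: "Ek 0 (zf 1 e) = 1 - fps_X ^ e"
  using Ek_zf[of "1" 0 e] FS_one by (simp add: ev_one Ek_one)

lemma eqN_inverse':
  fixes F G :: "'a::field fps"
  assumes "eqN n F G" "G$0 \<noteq> 0"
  shows "eqN n (inverse F) (inverse G)"
  using assms eqN_inverse[OF assms(1)] by (simp add: eqN_def)

lemma Mbar2_formula: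
  assumes j: "1 \<le> j" and nN: "n \<le> N"
  shows "Mbar2 j n = (2 * PB N * (\<Sum>i<N. Lam (j + j*i))) $ n"
proof -
  define Qj where "Qj = (\<Prod>i<N. zf 1 (j + j*i))"
  define Pn where "Pn = (\<Prod>i<N. zf (-1) (1 + 1*i))"
  define Q1 where "Q1 = (\<Prod>i<N. zf 1 (1 + 1*i))"
  define Xz where "Xz = (\<Prod>i<N. zf fls_X (j + j*i))"
  define Xzi where "Xzi = (\<Prod>i<N. zf fls_X_inv (j + j*i))"
  have e1: "eqN n (qpoch 1 j j) Qj" unfolding Qj_def by (rule qpoch_eqN) (use j nN in auto)
  have e2: "eqN n (qpoch (-1) 1 1) Pn" unfolding Pn_def by (rule qpoch_eqN) (use nN in auto)
  have e3: "eqN n (qpoch 1 1 1) Q1" unfolding Q1_def by (rule qpoch_eqN) (use nN in auto)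
  have e4: "eqN n (qpoch fls_X j j) Xz" unfolding Xz_def by (rule qpoch_eqN) (use j nN in auto)
  have e5: "eqN n (qpoch fls_X_inv j j) Xzi" unfolding Xzi_def by (rule qpoch_eqN) (use j nN in auto)
  have Q10: "Q1 $ 0 = 1" unfolding Q1_def fps_prod_nth0 by simp
  have XX0: "Xz $ 0 = 1" "Xzi $ 0 = 1" unfolding Xz_def Xzi_def fps_prod_nth0 using j by simp_all
  have eG: "eqN n (GenM j) (Qj * (Pn * inverse Q1) * (Qj * inverse (Xz * Xzi)))"
    unfolding GenM_def Pbar_def Cj_def
    by (intro eqN_mult e1 e2 eqN_inverse' e3 e4 e5) (simp_all add: Q10 XX0)
  have "Mbar2 j n = ev 2 (GenM j $ n)"
    unfolding Mbar2_def Mbar_def ev_def fsupp_def by simp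
  also have "\<dots> = Ek 2 (Qj * (Pn * inverse Q1) * (Qj * inverse (Xz * Xzi))) $ n"
    using eqN_nth[OF eG] by simp
  also have "\<dots> = (2 * Ek 0 (Pn * inverse Q1) * (\<Sum>i<N. Lam (j + j*i))) $ n"
    unfolding Qj_def Pn_def Q1_def Xz_def Xzi_def GN_lemma[OF j] ..
  also have "Ek 0 (Pn * inverse Q1) = PB N"
  proof -
    have FPn: "FSS Pn" unfolding Pn_def by (intro FSS_prod FSS_zf FS_uminus FS_one)
    have FQ1: "FSS Q1" unfolding Q1_def by (intro FSS_prod FSS_zf FS_one)
    have "Ek 0 Pn = (\<Prod>i<N. 1 + fps_X ^ (1 + 1*i))" unfolding Pn_def
      by (subst Ek0_prod) (auto intro!: FSS_zf FS_uminus FS_one simp only: Ek0_zfm1)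
    moreover have "Ek 0 Q1 = (\<Prod>i<N. 1 - fps_X ^ (1 + 1*i))" unfolding Q1_def
      by (subst Ek0_prod) (auto intro!: FSS_zf FS_one simp only: Ek0_zfp1)
    ultimately show ?thesis
      using FPn FQ1 Q10 by (simp add: Ek0_mult FSS_inverse Ek0_inverse PB_def)
  qed
  finally show ?thesis .
qed


definition MOP :: "nat \<Rightarrow> nat \<Rightarrow> (nat multiset \<times> nat set) set" where
  "MOP m s = {(M, S). (\<forall>x\<in>#M. 0 < x \<and> x \<le> m) \<and> sum_mset M = s \<and> S \<subseteq> set_mset M}"

lemma mem_le_sum_mset: "x \<in># M \<Longrightarrow> x \<le> sum_mset (M :: nat multiset)"
  by (auto dest!: multi_member_split)

lemma size_le_sum_mset: "(\<forall>x\<in>#M. 0 < x) \<Longrightarrow> size M \<le> sum_mset (M :: nat multiset)"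
  by (induction M) auto

lemma MOP_finite: "finite (MOP m s)"
proof -
  have "MOP m s \<subseteq> (\<Union>n\<in>{..s}. multisets_of_size {..m} n) \<times> Pow {..m}"
  proof
    fix p assume "p \<in> MOP m s"
    then obtain M S where p: "p = (M, S)" "\<forall>x\<in>#M. 0 < x \<and> x \<le> m" "sum_mset M = s" "S \<subseteq> set_mset M"
      by (auto simp: MOP_def)
    have "size M \<le> s" using size_le_sum_mset[of M] p by auto
    moreover have "set_mset M \<subseteq> {..m}" using p by auto
    ultimately show "p \<in> (\<Union>n\<in>{..s}. multisets_of_size {..m} n) \<times> Pow {..m}"
      using p by (auto simp: multisets_of_size_def)
  qed
  moreover have "finite ((\<Union>n\<in>{..s}. multisets_of_size {..m} n) \<times> Pow {..m})" by auto
  ultimately show ?thesis by (rule finite_subset)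
qed



lemma remove_MOP:
  assumes p: "(M, S) \<in> MOP m s" and vM: "v \<in># M" and T: "T \<subseteq> S" "v \<notin> T"
  shows "(M - {#v#}, T) \<in> MOP m (s - v)"
proof -
  have M: "\<forall>x\<in>#M. 0 < x \<and> x \<le> m" "sum_mset M = s" "S \<subseteq> set_mset M"
    using p by (auto simp: MOP_def)
  have 1: "\<forall>x\<in># M - {#v#}. 0 < x \<and> x \<le> m" using M(1) by (auto dest: in_diffD)
  have Md: "M = add_mset v (M - {#v#})" using vM by simp
  have "s = v + sum_mset (M - {#v#})" using M(2) by (subst (asm) Md) simp
  hence 2: "sum_mset (M - {#v#}) = s - v" by simp
  have 3: "T \<subseteq> set_mset (M - {#v#})"
  proof
    fix x assume x: "x \<in> T"
    hence "x \<in># M" "x \<noteq> v" using T M(3) by auto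
    thus "x \<in># M - {#v#}" by (simp add: in_diff_count)
  qed
  show ?thesis using 1 2 3 by (simp add: MOP_def)
qed

lemma add_MOP:
  assumes p: "(M, S) \<in> MOP m (s - v)" and v: "1 \<le> v" "v \<le> m" "v \<le> s" and T: "T \<subseteq> insert v S"
  shows "(add_mset v M, T) \<in> MOP m s"
  using p v T by (auto simp: MOP_def)

lemma bij_In:
  assumes v: "1 \<le> v" "v \<le> m" "v \<le> s"
  shows "bij_betw (\<lambda>(M, S). (M - {#v#}, S - {v})) {p \<in> MOP m s. v \<in> snd p} {p \<in> MOP m (s - v). v \<notin> snd p}"
proof (rule bij_betw_byWitness[where f' = "\<lambda>(M, S). (add_mset v M, insert v S)"])
  show "\<forall>a\<in>{p \<in> MOP m s. v \<in> snd p}. (case case a of (M, S) \<Rightarrow> (M - {#v#}, S - {v}) of (M, S) \<Rightarrow> (add_mset v M, insert v S)) = a"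
  proof
    fix a assume a: "a \<in> {p \<in> MOP m s. v \<in> snd p}"
    obtain M S where aMS: "a = (M, S)" by fastforce
    have "v \<in> S" "S \<subseteq> set_mset M" using a aMS by (auto simp: MOP_def)
    thus "(case case a of (M, S) \<Rightarrow> (M - {#v#}, S - {v}) of (M, S) \<Rightarrow> (add_mset v M, insert v S)) = a"
      using aMS by auto
  qed
  show "\<forall>a'\<in>{p \<in> MOP m (s - v). v \<notin> snd p}. (case case a' of (M, S) \<Rightarrow> (add_mset v M, insert v S) of (M, S) \<Rightarrow> (M - {#v#}, S - {v})) = a'"
    by auto
  show "(\<lambda>(M, S). (M - {#v#}, S - {v})) ` {p \<in> MOP m s. v \<in> snd p} \<subseteq> {p \<in> MOP m (s - v). v \<notin> snd p}"
  proof
    fix y assume "y \<in> (\<lambda>(M, S). (M - {#v#}, S - {v})) ` {p \<in> MOP m s. v \<in> snd p}"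
    then obtain M S where MS: "(M, S) \<in> MOP m s" "v \<in> S" "y = (M - {#v#}, S - {v})" by auto
    hence "v \<in># M" by (auto simp: MOP_def)
    hence "(M - {#v#}, S - {v}) \<in> MOP m (s - v)" using MS by (intro remove_MOP) auto
    thus "y \<in> {p \<in> MOP m (s - v). v \<notin> snd p}" using MS by simp
  qed
  show "(\<lambda>(M, S). (add_mset v M, insert v S)) ` {p \<in> MOP m (s - v). v \<notin> snd p} \<subseteq> {p \<in> MOP m s. v \<in> snd p}"
    using v by (auto intro: add_MOP)
qed

lemma bij_PartOut:
  assumes v: "1 \<le> v" "v \<le> m" "v \<le> s"
  shows "bij_betw (\<lambda>(M, S). (M - {#v#}, S)) {p \<in> MOP m s. v \<in># fst p \<and> v \<notin> snd p} {p \<in> MOP m (s - v). v \<notin> snd p}"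
proof (rule bij_betw_byWitness[where f' = "\<lambda>(M, S). (add_mset v M, S)"])
  show "\<forall>a\<in>{p \<in> MOP m s. v \<in># fst p \<and> v \<notin> snd p}. (case case a of (M, S) \<Rightarrow> (M - {#v#}, S) of (M, S) \<Rightarrow> (add_mset v M, S)) = a"
    by auto
  show "\<forall>a'\<in>{p \<in> MOP m (s - v). v \<notin> snd p}. (case case a' of (M, S) \<Rightarrow> (add_mset v M, S) of (M, S) \<Rightarrow> (M - {#v#}, S)) = a'"
    by auto
  show "(\<lambda>(M, S). (M - {#v#}, S)) ` {p \<in> MOP m s. v \<in># fst p \<and> v \<notin> snd p} \<subseteq> {p \<in> MOP m (s - v). v \<notin> snd p}"
  proof
    fix y assume "y \<in> (\<lambda>(M, S). (M - {#v#}, S)) ` {p \<in> MOP m s. v \<in># fst p \<and> v \<notin> snd p}"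
    then obtain M S where MS: "(M, S) \<in> MOP m s" "v \<in># M" "v \<notin> S" "y = (M - {#v#}, S)" by auto
    hence "(M - {#v#}, S) \<in> MOP m (s - v)" by (intro remove_MOP) auto
    thus "y \<in> {p \<in> MOP m (s - v). v \<notin> snd p}" using MS by simp
  qed
  show "(\<lambda>(M, S). (add_mset v M, S)) ` {p \<in> MOP m (s - v). v \<notin> snd p} \<subseteq> {p \<in> MOP m s. v \<in># fst p \<and> v \<notin> snd p}"
    using v by (auto intro: add_MOP)
qed


lemma card_In:
  assumes "1 \<le> v" "v \<le> m"
  shows "card {p \<in> MOP m s. v \<in> snd p} = (if v \<le> s then card {p \<in> MOP m (s - v). v \<notin> snd p} else 0)"
proof (cases "v \<le> s")
  case True
  then show ?thesis using bij_betw_same_card[OF bij_In[OF assms True]] by simp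
next
  case False
  have E: "{p \<in> MOP m s. v \<in> snd p} = {}"
  proof (rule ccontr)
    assume "{p \<in> MOP m s. v \<in> snd p} \<noteq> {}"
    then obtain M S where "(M, S) \<in> MOP m s" "v \<in> S" by auto
    hence "v \<in># M" "sum_mset M = s" by (auto simp: MOP_def)
    thus False using mem_le_sum_mset[of v M] False by simp
  qed
  show ?thesis unfolding E using False by simp
qed

lemma card_PartOut:
  assumes "1 \<le> v" "v \<le> m"
  shows "card {p \<in> MOP m s. v \<in># fst p \<and> v \<notin> snd p} = (if v \<le> s then card {p \<in> MOP m (s - v). v \<notin> snd p} else 0)"
proof (cases "v \<le> s")
  case True
  then show ?thesis using bij_betw_same_card[OF bij_PartOut[OF assms True]] by simp
next
  case False
  have E: "{p \<in> MOP m s. v \<in># fst p \<and> v \<notin> snd p} = {}"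
  proof (rule ccontr)
    assume "{p \<in> MOP m s. v \<in># fst p \<and> v \<notin> snd p} \<noteq> {}"
    then obtain M S where "(M, S) \<in> MOP m s" "v \<in># M" by auto
    hence "v \<in># M" "sum_mset M = s" by (auto simp: MOP_def)
    thus False using mem_le_sum_mset[of v M] False by simp
  qed
  show ?thesis unfolding E using False by simp
qed

lemma card_split:
  "card (MOP m s) = card {p \<in> MOP m s. P p} + card {p \<in> MOP m s. \<not> P p}"
proof -
  have "MOP m s = {p \<in> MOP m s. P p} \<union> {p \<in> MOP m s. \<not> P p}" by auto
  moreover have "card ({p \<in> MOP m s. P p} \<union> {p \<in> MOP m s. \<not> P p}) = card {p \<in> MOP m s. P p} + card {p \<in> MOP m s. \<not> P p}"
    by (rule card_Un_disjoint) (auto intro: finite_subset[OF _ MOP_finite])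
  ultimately show ?thesis by simp
qed

lemma MOP_split_m:
  assumes m: "1 \<le> m"
  shows "{p \<in> MOP m s. \<not> (m \<in># fst p)} = MOP (m - 1) s"
proof (rule set_eqI)
  fix p :: "nat multiset \<times> nat set"
  obtain M S where p: "p = (M, S)" by fastforce
  have "(\<forall>x\<in>#M. 0 < x \<and> x \<le> m) \<and> \<not> m \<in># M \<longleftrightarrow> (\<forall>x\<in>#M. 0 < x \<and> x \<le> m - 1)"
  proof
    assume H: "(\<forall>x\<in>#M. 0 < x \<and> x \<le> m) \<and> \<not> m \<in># M"
    show "\<forall>x\<in>#M. 0 < x \<and> x \<le> m - 1"
    proof
      fix x assume x: "x \<in># M"
      hence "0 < x" "x \<le> m" "x \<noteq> m" using H by auto
      thus "0 < x \<and> x \<le> m - 1" by linarith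
    qed
  next
    assume H: "\<forall>x\<in>#M. 0 < x \<and> x \<le> m - 1"
    hence "\<forall>x\<in>#M. 0 < x \<and> x \<le> m" by auto
    moreover have "\<not> m \<in># M" using H m by fastforce
    ultimately show "(\<forall>x\<in>#M. 0 < x \<and> x \<le> m) \<and> \<not> m \<in># M" by blast
  qed
  thus "p \<in> {p \<in> MOP m s. \<not> (m \<in># fst p)} \<longleftrightarrow> p \<in> MOP (m - 1) s"
    unfolding p MOP_def by auto
qed

lemma card_MOP_rec:
  assumes m: "1 \<le> m"
  shows "card (MOP m s) = card (MOP (m - 1) s) + (if m \<le> s then 2 * card {p \<in> MOP m (s - m). m \<notin> snd p} else 0)"
proof -
  have a: "{p \<in> MOP m s. \<not> (m \<in># fst p)} = MOP (m - 1) s" by (rule MOP_split_m[OF m])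
  have sub: "{p \<in> MOP m s. m \<in> snd p} \<subseteq> {p \<in> MOP m s. m \<in># fst p}" by (auto simp: MOP_def)
  have b: "card {p \<in> MOP m s. m \<in># fst p} = card {p \<in> MOP m s. m \<in> snd p} + card {p \<in> MOP m s. m \<in># fst p \<and> m \<notin> snd p}"
  proof -
    have "{p \<in> MOP m s. m \<in># fst p} = {p \<in> MOP m s. m \<in> snd p} \<union> {p \<in> MOP m s. m \<in># fst p \<and> m \<notin> snd p}"
      using sub by blast
    moreover have "card ({p \<in> MOP m s. m \<in> snd p} \<union> {p \<in> MOP m s. m \<in># fst p \<and> m \<notin> snd p}) = card {p \<in> MOP m s. m \<in> snd p} + card {p \<in> MOP m s. m \<in># fst p \<and> m \<notin> snd p}"
      by (rule card_Un_disjoint) (auto intro: finite_subset[OF _ MOP_finite])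
    ultimately show ?thesis by simp
  qed
  have c: "card (MOP m s) = card {p \<in> MOP m s. m \<in># fst p} + card {p \<in> MOP m s. \<not> (m \<in># fst p)}"
    by (rule card_split)
  show ?thesis
    unfolding c a b card_In[OF m order.refl, of s] card_PartOut[OF m order.refl, of s]
    by simp
qed

lemma card_Out_rec:
  assumes "1 \<le> v" "v \<le> m"
  shows "card {p \<in> MOP m s. v \<notin> snd p} + (if v \<le> s then card {p \<in> MOP m (s - v). v \<notin> snd p} else 0) = card (MOP m s)"
  using card_split[of m s "\<lambda>p. v \<in> snd p"] card_In[OF assms, of s] by simp

lemma MOP_0: "MOP 0 s = (if s = 0 then {({#}, {})} else {})"
proof -
  have e: "M = {#}" if "\<forall>x\<in>#M. 0 < x \<and> x \<le> (0::nat)" for M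
    using that by (cases M) auto
  have "(M, S) \<in> MOP 0 s \<longleftrightarrow> M = {#} \<and> S = {} \<and> s = 0" for M S
  proof
    assume "(M, S) \<in> MOP 0 s"
    hence "\<forall>x\<in>#M. 0 < x \<and> x \<le> (0::nat)" "sum_mset M = s" "S \<subseteq> set_mset M" by (auto simp: MOP_def)
    thus "M = {#} \<and> S = {} \<and> s = 0" using e by auto
  qed (auto simp: MOP_def)
  thus ?thesis by auto
qed


lemma sorted_desc_unique:
  fixes xs ys :: "nat list"
  assumes "sorted_wrt (\<ge>) xs" "sorted_wrt (\<ge>) ys" "mset xs = mset ys"
  shows "xs = ys"
proof -
  have s: "sorted (rev xs)" "sorted (rev ys)" using assms(1,2) by (simp_all add: sorted_wrt_rev)
  have "sort (rev ys) = rev xs" by (rule properties_for_sort) (use assms(3) s in simp_all)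
  moreover have "sort (rev ys) = rev ys" using s(2) by (simp add: sorted_sort_id)
  ultimately show ?thesis by simp
qed

lemma bij_OP_MOP:
  "bij_betw (\<lambda>(xs, S). (mset xs, S)) (overpartitions n) (MOP n n)"
proof (rule bij_betw_imageI)
  show "inj_on (\<lambda>(xs, S). (mset xs, S)) (overpartitions n)"
    by (auto simp: inj_on_def overpartitions_def intro: sorted_desc_unique)
  show "(\<lambda>(xs, S). (mset xs, S)) ` overpartitions n = MOP n n"
  proof
    show "(\<lambda>(xs, S). (mset xs, S)) ` overpartitions n \<subseteq> MOP n n"
      by (auto simp: overpartitions_def MOP_def sum_mset_sum_list member_le_sum_list)
    show "MOP n n \<subseteq> (\<lambda>(xs, S). (mset xs, S)) ` overpartitions n"
    proof safe
      fix M S assume "(M, S) \<in> MOP n n"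
      hence M: "\<forall>x\<in>#M. 0 < x \<and> x \<le> n" "sum_mset M = n" "S \<subseteq> set_mset M" by (auto simp: MOP_def)
      define xs where "xs = rev (sorted_list_of_multiset M)"
      have "mset xs = M" by (simp add: xs_def)
      moreover have "(xs, S) \<in> overpartitions n"
        unfolding overpartitions_def using M
        by (auto simp: xs_def sorted_wrt_rev sum_mset_sum_list[symmetric])
      ultimately show "(M, S) \<in> (\<lambda>(xs, S). (mset xs, S)) ` overpartitions n"
        by (intro image_eqI[of _ _ "(xs, S)"]) auto
    qed
  qed
qed

lemma ov_MOP: "ov k n = (\<Sum>p\<in>MOP n n. \<Sum>v\<in>{v \<in> snd p. k dvd v}. v)"
proof -
  have "(\<Sum>p\<in>overpartitions n. \<Sum>v\<in>{v \<in> snd ((\<lambda>(xs, S). (mset xs, S)) p). k dvd v}. v) = (\<Sum>p\<in>MOP n n. \<Sum>v\<in>{v \<in> snd p. k dvd v}. v)"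
    by (rule sum.reindex_bij_betw[OF bij_OP_MOP])
  thus ?thesis by (simp add: ov_def case_prod_unfold)
qed

lemma ov_sum: "ov k n = (\<Sum>v\<in>{v \<in> {1..n}. k dvd v}. v * card {p \<in> MOP n n. v \<in> snd p})"
proof -
  have "ov k n = (\<Sum>p\<in>MOP n n. \<Sum>v\<in>{1..n}. if v \<in> snd p \<and> k dvd v then v else 0)"
    unfolding ov_MOP
  proof (rule sum.cong[OF refl])
    fix p assume p: "p \<in> MOP n n"
    have sub: "snd p \<subseteq> {1..n}"
    proof
      fix x assume x: "x \<in> snd p"
      obtain M S where MS: "p = (M, S)" by fastforce
      have "\<forall>x\<in>#M. 0 < x \<and> x \<le> n" "S \<subseteq> set_mset M" using p MS by (auto simp: MOP_def)
      hence "x \<in># M" "\<forall>x\<in>#M. 0 < x \<and> x \<le> n" using x MS by auto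
      hence "0 < x" "x \<le> n" by auto
      thus "x \<in> {1..n}" by simp
    qed
    show "(\<Sum>v\<in>{v \<in> snd p. k dvd v}. v) = (\<Sum>v\<in>{1..n}. if v \<in> snd p \<and> k dvd v then v else 0)"
      by (subst sum.inter_filter[symmetric]) (use sub in \<open>auto intro!: sum.cong\<close>)
  qed
  also have "\<dots> = (\<Sum>v\<in>{1..n}. \<Sum>p\<in>MOP n n. if v \<in> snd p \<and> k dvd v then v else 0)"
    by (rule sum.swap)
  also have "\<dots> = (\<Sum>v\<in>{1..n}. if k dvd v then v * card {p \<in> MOP n n. v \<in> snd p} else 0)"
  proof (rule sum.cong[OF refl])
    fix v
    show "(\<Sum>p\<in>MOP n n. if v \<in> snd p \<and> k dvd v then v else 0) = (if k dvd v then v * card {p \<in> MOP n n. v \<in> snd p} else 0)"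
      using sum.inter_filter[OF MOP_finite[of n n], of "\<lambda>_. v" "\<lambda>p. v \<in> snd p"] by (auto simp: mult.commute)
  qed
  also have "\<dots> = (\<Sum>v\<in>{v \<in> {1..n}. k dvd v}. v * card {p \<in> MOP n n. v \<in> snd p})"
    by (subst sum.inter_filter[symmetric]) auto
  finally show ?thesis .
qed


definition aF :: "nat \<Rightarrow> rat fps" where
  "aF m = Abs_fps (\<lambda>s. of_nat (card (MOP m s)))"
definition oF :: "nat \<Rightarrow> nat \<Rightarrow> rat fps" where
  "oF m v = Abs_fps (\<lambda>s. of_nat (card {p \<in> MOP m s. v \<notin> snd p}))"
definition iF :: "nat \<Rightarrow> nat \<Rightarrow> rat fps" where
  "iF m v = Abs_fps (\<lambda>s. of_nat (card {p \<in> MOP m s. v \<in> snd p}))"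

lemma iF_eq: "1 \<le> v \<Longrightarrow> v \<le> m \<Longrightarrow> iF m v = fps_X ^ v * oF m v"
  by (rule fps_ext) (auto simp: iF_def oF_def fps_X_power_mult_nth card_In)

lemma iF_oF: "iF m v + oF m v = aF m"
  by (rule fps_ext) (simp add: iF_def oF_def aF_def card_split[of m _ "\<lambda>p. v \<in> snd p"])

lemma aF_rec: "1 \<le> m \<Longrightarrow> aF m = aF (m - 1) + 2 * (fps_X ^ m * oF m m)"
  by (rule fps_ext) (auto simp: aF_def oF_def fps_X_power_mult_nth fps_two_mult_nth card_MOP_rec)

lemma aF_0: "aF 0 = 1"
  by (rule fps_ext) (simp add: aF_def MOP_0)

lemma oF_eq: "1 \<le> v \<Longrightarrow> v \<le> m \<Longrightarrow> oF m v * (1 + fps_X ^ v) = aF m"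
  using iF_oF[of m v] iF_eq[of v m] by (simp add: algebra_simps)

lemma aF_step:
  assumes "1 \<le> m"
  shows "aF m * (1 - fps_X ^ m) = aF (m - 1) * (1 + fps_X ^ m)"
proof -
  have o: "oF m m * (1 + fps_X ^ m) = aF m" using oF_eq[OF assms order.refl] .
  have "aF m * (1 - fps_X ^ m) = aF m * (1 + fps_X ^ m) - 2 * fps_X ^ m * aF m"
    by (simp add: algebra_simps)
  also have "\<dots> = aF (m - 1) * (1 + fps_X ^ m) + 2 * fps_X ^ m * (oF m m * (1 + fps_X ^ m)) - 2 * fps_X ^ m * aF m"
    by (subst (1) aF_rec[OF assms]) (simp add: algebra_simps)
  also have "\<dots> = aF (m - 1) * (1 + fps_X ^ m)" unfolding o by simp
  finally show ?thesis .
qed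

lemma aF_prod: "aF N * (\<Prod>i<N. 1 - fps_X ^ (1 + 1*i)) = (\<Prod>i<N. 1 + fps_X ^ (1 + 1*i))"
proof (induction N)
  case 0
  then show ?case by (simp add: aF_0)
next
  case (Suc N)
  have "aF (Suc N) * (\<Prod>i<Suc N. 1 - fps_X ^ (1 + 1*i)) = (aF (Suc N) * (1 - fps_X ^ Suc N)) * (\<Prod>i<N. 1 - fps_X ^ (1 + 1*i))"
    by (simp add: ac_simps)
  also have "\<dots> = (1 + fps_X ^ Suc N) * (aF N * (\<Prod>i<N. 1 - fps_X ^ (1 + 1*i)))"
    using aF_step[of "Suc N"] by (simp add: ac_simps)
  also have "\<dots> = (\<Prod>i<Suc N. 1 + fps_X ^ (1 + 1*i))" using Suc by (simp add: ac_simps)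
  finally show ?case .
qed

lemma aF_PB: "aF N = PB N"
proof -
  define D where "D = (\<Prod>i<N. 1 - fps_X ^ (1 + 1*i) :: rat fps)"
  have D0: "D $ 0 = 1" unfolding D_def fps_prod_nth0 by simp
  have "aF N = aF N * (D * inverse D)" using D0 by (simp add: inverse_mult_eq_1')
  also have "\<dots> = (aF N * D) * inverse D" by (simp add: ac_simps)
  also have "\<dots> = PB N" unfolding D_def aF_prod PB_def ..
  finally show ?thesis .
qed

definition Alt :: "nat \<Rightarrow> rat fps" where
  "Alt v = Abs_fps (\<lambda>t. if v dvd t \<and> 0 < t then (-1) ^ (t div v + 1) else 0)"

lemma Alt_eq:
  assumes v: "1 \<le> v"
  shows "Alt v * (1 + fps_X ^ v) = fps_X ^ v"
proof (rule fps_ext)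
  fix t
  have "(Alt v * (1 + fps_X ^ v)) $ t = Alt v $ t + (if t < v then 0 else Alt v $ (t - v))"
    by (simp add: distrib_left fps_X_power_mult_right_nth)
  also have "\<dots> = fps_X ^ v $ t"
  proof (cases "v dvd t")
    case True
    then obtain u where u: "t = v * u" by auto
    consider "u = 0" | "u = 1" | "u \<ge> 2" by linarith
    then show ?thesis
    proof cases
      case 1 then show ?thesis using u v by (simp add: Alt_def)
    next
      case 2 then show ?thesis using u v by (simp add: Alt_def)
    next
      case 3
      have t1: "t - v = v * (u - 1)" using u by (simp add: algebra_simps)
      have nl: "\<not> t < v" "t \<noteq> v" using 3 u v by (auto simp: mult_less_cancel1)
      have d1: "(t - v) div v = u - 1" using v by (subst t1) simp
      have d2: "t div v = u" using v u by simp
      have dv: "v dvd (t - v)" "v dvd t" unfolding t1 u by auto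
      have pos: "0 < t - v" "0 < t" using 3 v t1 u by auto
      have "(-1::rat) ^ (u + 1) + (-1) ^ (u - 1 + 1) = 0"
        using 3 by (cases u) auto
      then show ?thesis using nl d1 d2 dv pos by (simp add: Alt_def)
    qed
  next
    case False
    hence "\<not> v dvd (t - v)" if "\<not> t < v" using that
      by (metis dvd_add dvd_refl le_add_diff_inverse2 not_less)
    moreover have "t \<noteq> v" using False by auto
    ultimately show ?thesis using False by (simp add: Alt_def)
  qed
  finally show "(Alt v * (1 + fps_X ^ v)) $ t = fps_X ^ v $ t" .
qed

lemma iF_Alt:
  assumes "1 \<le> v" "v \<le> m"
  shows "iF m v = aF m * Alt v"
proof -
  have "iF m v * (1 + fps_X ^ v) = fps_X ^ v * aF m"
    using iF_eq[OF assms] oF_eq[OF assms] by (simp add: mult.assoc)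
  also have "\<dots> = (aF m * Alt v) * (1 + fps_X ^ v)"
    using Alt_eq[OF assms(1)] by (simp add: ac_simps)
  finally have "iF m v * (1 + fps_X ^ v) = (aF m * Alt v) * (1 + fps_X ^ v)" .
  moreover have "(1 + fps_X ^ v :: rat fps) \<noteq> 0"
  proof
    assume h: "(1 + fps_X ^ v :: rat fps) = 0"
    have "(1 + fps_X ^ v :: rat fps) $ 0 = 1" using assms by simp
    thus False unfolding h by simp
  qed
  ultimately show ?thesis by simp
qed

lemma ov_fps:
  "rat_of_nat (ov k n) = (PB n * (\<Sum>v\<in>{v \<in> {1..n}. k dvd v}. fps_const (of_nat v) * Alt v)) $ n"
proof -
  have "rat_of_nat (ov k n) = (\<Sum>v\<in>{v \<in> {1..n}. k dvd v}. of_nat v * iF n v $ n)"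
    unfolding ov_sum by (simp add: iF_def)
  also have "\<dots> = (\<Sum>v\<in>{v \<in> {1..n}. k dvd v}. of_nat v * (PB n * Alt v) $ n)"
    by (intro sum.cong refl) (auto simp: iF_Alt aF_PB)
  also have "\<dots> = (PB n * (\<Sum>v\<in>{v \<in> {1..n}. k dvd v}. fps_const (of_nat v) * Alt v)) $ n"
    by (simp add: sum_distrib_left fps_sum_nth mult.left_commute[of "PB n"])
  finally show ?thesis .
qed


lemma sum1:
  fixes t n k :: nat
  assumes t: "1 \<le> t" "t \<le> n" and k: "1 \<le> k"
  shows "(\<Sum>i\<in>{i. i < n \<and> (k + k*i) dvd t}. k * (t div (k + k*i)))
       = (\<Sum>v\<in>{v \<in> {1..n}. k dvd v \<and> v dvd t}. v)"
proof (rule sum.reindex_bij_witness[where j = "\<lambda>i. t div (i + 1)" and i = "\<lambda>v. t div v - 1"])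
  fix i assume i: "i \<in> {i. i < n \<and> (k + k*i) dvd t}"
  then obtain e where e: "t = (k + k*i) * e" by blast
  have e0: "e \<noteq> 0" using e t by (intro notI) simp
  have te: "t = (i + 1) * (k * e)" unfolding e by (simp add: algebra_simps)
  have tdiv: "t div (i + 1) = k * e" by (subst te, rule nonzero_mult_div_cancel_left) simp
  have ke0: "k * e \<noteq> 0" using k e0 by simp
  show "t div (t div (i + 1)) - 1 = i"
    unfolding tdiv unfolding e using ke0 by (simp add: algebra_simps)
  have "k * e \<le> t" using tdiv by (metis div_le_dividend)
  thus "t div (i + 1) \<in> {v \<in> {1..n}. k dvd v \<and> v dvd t}"
    unfolding tdiv using ke0 t by (auto simp: e algebra_simps)
  have "t div (k + k * i) = e" unfolding e using k by simp
  thus "t div (i + 1) = k * (t div (k + k * i))" unfolding tdiv by simp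
next
  fix v assume v: "v \<in> {v \<in> {1..n}. k dvd v \<and> v dvd t}"
  then obtain g where g: "t = v * g" by blast
  obtain f where f: "v = k * f" using v by blast
  have g0: "g \<noteq> 0" using g t by (intro notI) simp
  have v0: "v \<noteq> 0" using v by auto
  have tv: "t div v = g" using g v0 by simp
  show "t div (t div v - 1 + 1) = v" using tv g0 g by simp
  have "g \<le> t" using g v0 by simp
  hence gn: "g - 1 < n" using g0 t by linarith
  have i_eq: "k + k*(g - 1) = k*g" using g0 by (cases g) auto
  have "t = (k*g) * f" using g f by (simp add: algebra_simps)
  hence "(k + k*(g - 1)) dvd t" unfolding i_eq by simp
  thus "t div v - 1 \<in> {i. i < n \<and> (k + k*i) dvd t}"
    using gn tv by simp
qed

lemma sum2:
  fixes t n k :: nat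
  assumes t: "1 \<le> t" "t \<le> n" and k: "1 \<le> k"
  shows "(\<Sum>i\<in>{i. i < n \<and> (2*k + 2*k*i) dvd t}. 2 * k * (t div (2*k + 2*k*i)))
       = (\<Sum>v\<in>{v \<in> {1..n}. (k dvd v \<and> v dvd t) \<and> even (t div v)}. 2 * v)"
proof (rule sum.reindex_bij_witness[where j = "\<lambda>i. t div (2 * (i + 1))" and i = "\<lambda>v. t div v div 2 - 1"])
  fix i assume i: "i \<in> {i. i < n \<and> (2*k + 2*k*i) dvd t}"
  then obtain e where e: "t = (2*k + 2*k*i) * e" by blast
  have e0: "e \<noteq> 0" using e t by (intro notI) simp
  have te: "t = (2 * (i + 1)) * (k * e)" unfolding e by (simp add: algebra_simps)
  have tdiv: "t div (2 * (i + 1)) = k * e" by (subst te, rule nonzero_mult_div_cancel_left) simp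
  have ke0: "k * e \<noteq> 0" using k e0 by simp
  have tke: "t div (k * e) = 2 * (i + 1)" unfolding e using ke0 by (simp add: algebra_simps)
  show "t div (t div (2 * (i + 1))) div 2 - 1 = i"
    unfolding tdiv tke by simp
  have "k * e \<le> t" using tdiv by (metis div_le_dividend)
  thus "t div (2 * (i + 1)) \<in> {v \<in> {1..n}. (k dvd v \<and> v dvd t) \<and> even (t div v)}"
    unfolding tdiv tke using ke0 t by (auto simp: e algebra_simps)
  show "2 * (t div (2 * (i + 1))) = 2 * k * (t div (2 * k + 2 * k * i))"
    unfolding tdiv unfolding e using k by simp
next
  fix v assume v: "v \<in> {v \<in> {1..n}. (k dvd v \<and> v dvd t) \<and> even (t div v)}"
  then obtain g where g: "t = v * g" by blast
  obtain f where f: "v = k * f" using v by blast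
  have g0: "g \<noteq> 0" using g t by (intro notI) simp
  have v0: "v \<noteq> 0" using v by auto
  have tv: "t div v = g" using g v0 by simp
  have ge: "even g" using v tv by simp
  then obtain h where h: "g = 2 * h" by blast
  have h0: "h \<noteq> 0" using g0 h by simp
  show "t div (2 * (t div v div 2 - 1 + 1)) = v" using tv h h0 g by simp
  have "g \<le> t" using g v0 by simp
  hence hn: "h - 1 < n" using h h0 t by linarith
  have i_eq: "2*k + 2*k*(h - 1) = 2*k*h" using h0 by (cases h) auto
  have "t = (2*k*h) * f" using g f h by (simp add: algebra_simps)
  hence "(2*k + 2*k*(h - 1)) dvd t" unfolding i_eq by simp
  moreover have "t div v div 2 = h" using tv h by simp
  ultimately show "t div v div 2 - 1 \<in> {i. i < n \<and> (2*k + 2*k*i) dvd t}"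
    using hn by simp
qed


definition SL :: "nat \<Rightarrow> nat \<Rightarrow> rat fps" where
  "SL j n = (\<Sum>i<n. Lam (j + j*i))"

lemma coeff_identity:
  fixes k n t :: nat
  assumes k: "1 \<le> k" and tn: "t \<le> n"
  shows "(\<Sum>v\<in>{v \<in> {1..n}. k dvd v}. fps_const (of_nat v) * Alt v) $ t
       = (fps_const (of_nat k) * SL k n - fps_const (2 * of_nat k) * SL (2*k) n) $ t"
proof (cases "t = 0")
  case True
  then show ?thesis by (simp add: fps_sum_nth Alt_def SL_def Lam_def)
next
  case False
  hence t: "1 \<le> t" "t \<le> n" using tn by auto
  define V where "V = {v \<in> {1..n}. k dvd v \<and> v dvd t}"
  have finV: "finite V" by (simp add: V_def)
  have L: "(\<Sum>v\<in>{v \<in> {1..n}. k dvd v}. fps_const (of_nat v) * Alt v) $ t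
         = (\<Sum>v\<in>V. (of_nat v :: rat) * (-1) ^ (t div v + 1))"
  proof -
    have "(\<Sum>v\<in>{v \<in> {1..n}. k dvd v}. fps_const (of_nat v) * Alt v) $ t
        = (\<Sum>v\<in>{v \<in> {1..n}. k dvd v}. if v dvd t then (of_nat v :: rat) * (-1) ^ (t div v + 1) else 0)"
      unfolding fps_sum_nth using t by (intro sum.cong refl) (auto simp: Alt_def)
    also have "\<dots> = (\<Sum>v\<in>{v \<in> {v \<in> {1..n}. k dvd v}. v dvd t}. (of_nat v :: rat) * (-1) ^ (t div v + 1))"
      by (rule sum.inter_filter[symmetric]) simp
    also have "{v \<in> {v \<in> {1..n}. k dvd v}. v dvd t} = V" by (auto simp: V_def)
    finally show ?thesis .
  qed
  have R1: "(fps_const (of_nat k) * SL k n) $ t = of_nat (\<Sum>v\<in>V. v)"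
  proof -
    have "(fps_const (of_nat k) * SL k n) $ t
        = of_nat k * (\<Sum>i<n. if (k + k*i) dvd t then of_nat (t div (k + k*i)) else (0::rat))"
      by (simp add: SL_def fps_sum_nth Lam_def)
    also have "\<dots> = (\<Sum>i<n. if (k + k*i) dvd t then of_nat (k * (t div (k + k*i))) else (0::rat))"
      unfolding sum_distrib_left by (intro sum.cong refl) simp
    also have "\<dots> = (\<Sum>i\<in>{i \<in> {..<n}. (k + k*i) dvd t}. of_nat (k * (t div (k + k*i))))"
      by (rule sum.inter_filter[symmetric]) simp
    also have "{i \<in> {..<n}. (k + k*i) dvd t} = {i. i < n \<and> (k + k*i) dvd t}" by auto
    also have "(\<Sum>i\<in>{i. i < n \<and> (k + k*i) dvd t}. (of_nat (k * (t div (k + k*i))) :: rat))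
             = of_nat (\<Sum>i\<in>{i. i < n \<and> (k + k*i) dvd t}. k * (t div (k + k*i)))"
      by simp
    also have "\<dots> = of_nat (\<Sum>v\<in>V. v)" unfolding V_def sum1[OF t k] ..
    finally show ?thesis .
  qed
  have R2: "(fps_const (2 * of_nat k) * SL (2*k) n) $ t = of_nat (\<Sum>v\<in>{v\<in>V. even (t div v)}. 2 * v)"
  proof -
    have "(fps_const (2 * of_nat k) * SL (2*k) n) $ t
        = (2 * of_nat k) * (\<Sum>i<n. if (2*k + 2*k*i) dvd t then of_nat (t div (2*k + 2*k*i)) else (0::rat))"
      by (simp add: SL_def fps_sum_nth Lam_def)
    also have "\<dots> = (\<Sum>i<n. if (2*k + 2*k*i) dvd t then of_nat (2 * k * (t div (2*k + 2*k*i))) else (0::rat))"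
      unfolding sum_distrib_left by (intro sum.cong refl) simp
    also have "\<dots> = (\<Sum>i\<in>{i \<in> {..<n}. (2*k + 2*k*i) dvd t}. of_nat (2 * k * (t div (2*k + 2*k*i))))"
      by (rule sum.inter_filter[symmetric]) simp
    also have "{i \<in> {..<n}. (2*k + 2*k*i) dvd t} = {i. i < n \<and> (2*k + 2*k*i) dvd t}" by auto
    also have "(\<Sum>i\<in>{i. i < n \<and> (2*k + 2*k*i) dvd t}. (of_nat (2 * k * (t div (2*k + 2*k*i))) :: rat))
             = of_nat (\<Sum>i\<in>{i. i < n \<and> (2*k + 2*k*i) dvd t}. 2 * k * (t div (2*k + 2*k*i)))"
      by simp
    also have "\<dots> = of_nat (\<Sum>v\<in>{v\<in>V. even (t div v)}. 2 * v)"
    proof -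
      have setEq: "{v\<in>V. even (t div v)} = {v \<in> {1..n}. (k dvd v \<and> v dvd t) \<and> even (t div v)}"
        by (auto simp: V_def)
      show ?thesis by (simp only: sum2[OF t k] setEq)
    qed
    finally show ?thesis .
  qed
  have "(\<Sum>v\<in>V. (of_nat v :: rat) * (-1) ^ (t div v + 1))
      = (\<Sum>v\<in>V. of_nat v - (if even (t div v) then of_nat (2 * v) else 0))"
    by (intro sum.cong refl) auto
  also have "\<dots> = of_nat (\<Sum>v\<in>V. v) - (\<Sum>v\<in>V. if even (t div v) then of_nat (2 * v) else 0)"
    by (simp add: sum_subtractf)
  also have "(\<Sum>v\<in>V. if even (t div v) then of_nat (2 * v) else (0::rat)) = of_nat (\<Sum>v\<in>{v\<in>V. even (t div v)}. 2 * v)"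
    using sum.inter_filter[OF finV, of "\<lambda>v. of_nat (2 * v) :: rat" "\<lambda>v. even (t div v)"] by simp
  finally show ?thesis unfolding L using R1 R2 by simp
qed


theorem mainTheorem4:
  fixes k n :: nat
  assumes "k \<ge> 1"
  shows "rat_of_nat (ov k n) = rat_of_nat k / 2 * Mbar2 k n - rat_of_nat k * Mbar2 (2 * k) n"
proof -
  have k: "1 \<le> k" using assms .
  have k2: "1 \<le> 2 * k" using k by simp
  have M1: "Mbar2 k n = 2 * (PB n * SL k n) $ n"
  proof -
    have "Mbar2 k n = (2 * PB n * SL k n) $ n"
      using Mbar2_formula[OF k order.refl] unfolding SL_def .
    also have "2 * PB n * SL k n = 2 * (PB n * SL k n)" by (simp only: mult.assoc)
    finally show ?thesis by (simp only: fps_two_mult_nth)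
  qed
  have M2: "Mbar2 (2 * k) n = 2 * (PB n * SL (2*k) n) $ n"
  proof -
    have "Mbar2 (2 * k) n = (2 * PB n * SL (2 * k) n) $ n"
      using Mbar2_formula[OF k2 order.refl] unfolding SL_def .
    also have "2 * PB n * SL (2 * k) n = 2 * (PB n * SL (2 * k) n)" by (simp only: mult.assoc)
    finally show ?thesis by (simp only: fps_two_mult_nth)
  qed
  have E: "eqN n (\<Sum>v\<in>{v \<in> {1..n}. k dvd v}. fps_const (of_nat v) * Alt v)
        (fps_const (of_nat k) * SL k n - fps_const (2 * of_nat k) * SL (2*k) n)"
    unfolding eqN_def using coeff_identity[OF k] by blast
  have "rat_of_nat (ov k n) = (PB n * (fps_const (of_nat k) * SL k n - fps_const (2 * of_nat k) * SL (2*k) n)) $ n"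
    unfolding ov_fps using eqN_nth[OF eqN_mult[OF eqN_refl E]] .
  also have "PB n * (fps_const (of_nat k) * SL k n - fps_const (2 * of_nat k) * SL (2*k) n)
      = fps_const (of_nat k) * (PB n * SL k n) - fps_const (2 * of_nat k) * (PB n * SL (2*k) n)"
    by algebra
  also have "(fps_const (of_nat k) * (PB n * SL k n) - fps_const (2 * of_nat k) * (PB n * SL (2*k) n)) $ n
      = of_nat k * (PB n * SL k n) $ n - 2 * of_nat k * (PB n * SL (2*k) n) $ n"
    by (simp only: fps_sub_nth fps_mult_left_const_nth)
  also have "\<dots> = rat_of_nat k / 2 * Mbar2 k n - rat_of_nat k * Mbar2 (2 * k) n"
    unfolding M1 M2 by simp
  finally show ?thesis .
qed

end
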